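(* Let $\mathcal{P}$ be a finite nonempty set of stochastic trees and $\Pi=(G,\{[s]\}_{s\in S_\mathcal{P}})$ a stochastic partition of $S_\mathcal{P}$. Then the quotient $\mathcal{P}/\Pi$ is a well-defined LPTS; that is, for every transition $(g,a,\mu)$ of $\mathcal{P}/\Pi$, $\mu$ is a probability distribution on $G$.
   Context: $\mathrm{Dist}(S)$ is the set of discrete probability distributions on $S$ (rational probabilities), $\delta_g$ the Dirac distribution on $g$. An LPTS is $\langle S,s^0,\alpha,\tau\rangle$ with finite $S$, start $s^0$, finite actions $\alpha$, finite $\tau\subseteq S\times\alpha\times\mathrm{Dist}(S)$; write $s\xrightarrow{a}\mu$. A stochastic tree is an LPTS whose start state is in the support of no transition's distribution and each other state is in the support of exactly one transition's distribution; for a non-start state $s$, $\mathrm{parent}(s)$ is the source state of that unique transition. $S_\mathcal{P}$ is the (disjoint) union of the state sets of the trees in $\mathcal{P}$. A stochastic partition of $S_\mathcal{P}$ is a pair $(G,\{[s]\}_{s\in S_\mathcal{P}})$ with $G\subseteq 2^{S_\mathcal{P}}$, $\bigcup G=S_\mathcal{P}$, and each $[s]$ a partial function $G\to\mathrm{Dist}(G)$ (with the convention $[s](g')(g)=0$ for all $g$ when $[s](g')$ is undefined), such that: (1) there is $g^0\in G$ with $[s^0_P](g)=\delta_{g^0}$ for every $P\in\mathcal{P}$ and every $g\in G$; (2) for every non-start state $s$ and $g\in G$, $[s](g)$ is defined iff $[\mathrm{parent}(s)](g')(g)>0$ for some $g'\in G$; and moreover for all $s\in S_\mathcal{P}$,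 $g\in G$: $s\in g$ iff $[s](g')(g)>0$ for some $g'\in G$. The quotient $\mathcal{P}/\Pi$ has states $G$, start state $g^0$, actions $\bigcup_{P\in\mathcal{P}}\alpha_P$, and $(g,a,\mu)$ is a transition iff some $P\in\mathcal{P}$ has a transition $s\xrightarrow{a}\mu_p$ with $s\in g$ and, for every $g'\in G$, $\mu(g')=\sum_{s'\in g'}[s'](g)(g')\cdot\mu_p(s')$. *)

theory Defs
  imports Complex_Main
begin

definition is_dist :: "'x set \<Rightarrow> ('x \<Rightarrow> rat) \<Rightarrow> bool" where
  "is_dist S \<mu> \<longleftrightarrow> (\<forall>x. 0 \<le> \<mu> x) \<and> (\<forall>x. x \<notin> S \<longrightarrow> \<mu> x = 0) \<and> sum \<mu> S = 1"

definition dirac :: "'x \<Rightarrow> 'x \<Rightarrow> rat" where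
  "dirac g = (\<lambda>h. if h = g then 1 else 0)"

record ('s, 'a) lpts =
  st  :: "'s set"
  s0  :: 's
  act :: "'a set"
  tr  :: "('s \<times> 'a \<times> ('s \<Rightarrow> rat)) set"

definition is_lpts :: "('s, 'a) lpts \<Rightarrow> bool" where
  "is_lpts L \<longleftrightarrow> finite (st L) \<and> s0 L \<in> st L \<and> finite (act L) \<and> finite (tr L) \<and>
     (\<forall>(s, a, \<mu>) \<in> tr L. s \<in> st L \<and> a \<in> act L \<and> is_dist (st L) \<mu>)"

definition stochastic_tree :: "('s, 'a) lpts \<Rightarrow> bool" where
  "stochastic_tree L \<longleftrightarrow> is_lpts L \<and>
     (\<forall>(s, a, \<mu>) \<in> tr L. \<not> (\<mu> (s0 L) > 0)) \<and>
     (\<forall>t \<in> st L - {s0 L}. \<exists>!x. x \<in> tr L \<and> snd (snd x) t > 0)"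

definition parent :: "('s, 'a) lpts \<Rightarrow> 's \<Rightarrow> 's" where
  "parent L t = fst (THE x. x \<in> tr L \<and> snd (snd x) t > 0)"

text \<open>States of the disjoint union are tagged with the tree they come from.\<close>
definition SP :: "('s, 'a) lpts set \<Rightarrow> (('s, 'a) lpts \<times> 's) set" where
  "SP \<P> = {(P, s). P \<in> \<P> \<and> s \<in> st P}"

type_synonym ('s, 'a) pstate = "('s, 'a) lpts \<times> 's"

text \<open>The family of partial functions [s] : G \<rightharpoonup> Dist(G); value with the convention
  [s](g')(g) = 0 when [s](g') is undefined.\<close>
definition pval :: "('x \<Rightarrow> 'x set \<Rightarrow> ('x set \<Rightarrow> rat) option) \<Rightarrow> 'x \<Rightarrow> 'x set \<Rightarrow> 'x set \<Rightarrow> rat" where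
  "pval part s g' g = (case part s g' of None \<Rightarrow> 0 | Some \<mu> \<Rightarrow> \<mu> g)"

definition stochastic_partition ::
  "('s, 'a) lpts set \<Rightarrow> ('s, 'a) pstate set set \<Rightarrow>
   (('s, 'a) pstate \<Rightarrow> ('s, 'a) pstate set \<Rightarrow> (('s, 'a) pstate set \<Rightarrow> rat) option) \<Rightarrow> bool" where
  "stochastic_partition \<P> G part \<longleftrightarrow>
     G \<subseteq> Pow (SP \<P>) \<and> \<Union> G = SP \<P> \<and>
     (\<forall>s \<in> SP \<P>. \<forall>g \<mu>. part s g = Some \<mu> \<longrightarrow> g \<in> G \<and> is_dist G \<mu>) \<and>
     (\<exists>g0 \<in> G. \<forall>P \<in> \<P>. \<forall>g \<in> G. part (P, s0 P) g = Some (dirac g0)) \<and>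
     (\<forall>P \<in> \<P>. \<forall>t \<in> st P - {s0 P}. \<forall>g \<in> G.
        part (P, t) g \<noteq> None \<longleftrightarrow> (\<exists>g' \<in> G. pval part (P, parent P t) g' g > 0)) \<and>
     (\<forall>s \<in> SP \<P>. \<forall>g \<in> G. s \<in> g \<longleftrightarrow> (\<exists>g' \<in> G. pval part s g' g > 0))"

definition quotient ::
  "('s, 'a) lpts set \<Rightarrow> ('s, 'a) pstate set set \<Rightarrow>
   (('s, 'a) pstate \<Rightarrow> ('s, 'a) pstate set \<Rightarrow> (('s, 'a) pstate set \<Rightarrow> rat) option) \<Rightarrow>
   (('s, 'a) pstate set, 'a) lpts" where
  "quotient \<P> G part =
     \<lparr> st = G,
       s0 = (SOME g0. g0 \<in> G \<and> (\<forall>P \<in> \<P>. \<forall>g \<in> G. part (P, s0 P) g = Some (dirac g0))),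
       act = (\<Union>P \<in> \<P>. act P),
       tr = {(g, a, \<mu>). g \<in> G \<and>
               (\<exists>P \<in> \<P>. \<exists>s \<mu>p. (s, a, \<mu>p) \<in> tr P \<and> (P, s) \<in> g \<and>
                  (\<forall>g' \<in> G. \<mu> g' =
                     (\<Sum>s' \<in> g'. pval part s' g g' * (if fst s' = P then \<mu>p (snd s') else 0)))) \<and>
               (\<forall>g'. g' \<notin> G \<longrightarrow> \<mu> g' = 0)} \<rparr>"

end

theory Submission
  imports Defs
begin

lemma treeD:
  assumes "stochastic_tree L"
  shows "is_lpts L" "\<And>s a \<mu>. (s, a, \<mu>) \<in> tr L \<Longrightarrow> \<not> (\<mu> (s0 L) > 0)"
    "\<And>t. t \<in> st L \<Longrightarrow> t \<noteq> s0 L \<Longrightarrow> \<exists>!x. x \<in> tr L \<and> snd (snd x) t > 0"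
proof -
  have h1: "is_lpts L" and h2: "\<forall>(s, a, \<mu>) \<in> tr L. \<not> (\<mu> (s0 L) > 0)"
    and h3: "\<forall>t \<in> st L - {s0 L}. \<exists>!x. x \<in> tr L \<and> snd (snd x) t > 0"
    using assms unfolding stochastic_tree_def by simp_all
  show "is_lpts L" by (rule h1)
  show "\<not> (\<mu> (s0 L) > 0)" if "(s, a, \<mu>) \<in> tr L" for s a \<mu>
    using bspec[OF h2 that] by simp
  show "\<exists>!x. x \<in> tr L \<and> snd (snd x) t > 0" if "t \<in> st L" "t \<noteq> s0 L" for t
    using h3 that by blast
qed

lemma lptsD:
  assumes "is_lpts L" "(s, a, \<mu>) \<in> tr L"
  shows "s \<in> st L" "a \<in> act L" "is_dist (st L) \<mu>"
proof -
  have h: "\<forall>(s, a, \<mu>) \<in> tr L. s \<in> st L \<and> a \<in> act L \<and> is_dist (st L) \<mu>"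
    using assms(1) unfolding is_lpts_def by simp
  from bspec[OF h assms(2)] show "s \<in> st L" "a \<in> act L" "is_dist (st L) \<mu>" by simp_all
qed

lemma SP_eq: "SP \<P> = (SIGMA P:\<P>. st P)"
  unfolding SP_def by auto

lemma finite_SP: "finite \<P> \<Longrightarrow> \<forall>P\<in>\<P>. is_lpts P \<Longrightarrow> finite (SP \<P>)"
  unfolding SP_eq is_lpts_def by (rule finite_SigmaI) auto

lemma spD:
  assumes "stochastic_partition \<P> G part"
  shows "G \<subseteq> Pow (SP \<P>)" "\<Union> G = SP \<P>"
    "\<forall>s \<in> SP \<P>. \<forall>g \<mu>. part s g = Some \<mu> \<longrightarrow> g \<in> G \<and> is_dist G \<mu>"
    "\<exists>g0 \<in> G. \<forall>P \<in> \<P>. \<forall>g \<in> G. part (P, s0 P) g = Some (dirac g0)"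
    "\<forall>P \<in> \<P>. \<forall>t \<in> st P - {s0 P}. \<forall>g \<in> G.
        part (P, t) g \<noteq> None \<longleftrightarrow> (\<exists>g' \<in> G. pval part (P, parent P t) g' g > 0)"
    "\<forall>s \<in> SP \<P>. \<forall>g \<in> G. s \<in> g \<longleftrightarrow> (\<exists>g' \<in> G. pval part s g' g > 0)"
  using assms unfolding stochastic_partition_def
  apply -
  apply (elim conjE, assumption)+
  done

lemma pval_nonneg:
  assumes "stochastic_partition \<P> G part" "s \<in> SP \<P>"
  shows "0 \<le> pval part s g' g"
  using spD(3)[OF assms(1)] assms(2) unfolding pval_def is_dist_def
  by (cases "part s g'") auto

lemma pval_sum:
  assumes "stochastic_partition \<P> G part" "s \<in> SP \<P>" "part s g' \<noteq> None"
  shows "(\<Sum>g\<in>G. pval part s g' g) = 1"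
proof -
  obtain \<nu> where n: "part s g' = Some \<nu>" using assms(3) by auto
  then have "is_dist G \<nu>" using spD(3)[OF assms(1)] assms(2) by blast
  then show ?thesis using n unfolding pval_def is_dist_def by simp
qed

lemma dist_part:
  assumes fin: "finite \<P>" and trees: "\<forall>P \<in> \<P>. stochastic_tree P"
    and sp: "stochastic_partition \<P> G part"
    and P: "P \<in> \<P>" and tr: "(s, a, \<mu>p) \<in> tr P" and gG: "g \<in> G" and sg: "(P, s) \<in> g"
  shows "(\<Sum>g'\<in>G. \<Sum>s'\<in>g'. pval part s' g g' * (if fst s' = P then \<mu>p (snd s') else 0)) = 1"
proof -
  define f where "f s' g' = pval part s' g g' * (if fst s' = P then \<mu>p (snd s') else 0)" for s' g'
  have lp: "\<forall>P\<in>\<P>. is_lpts P" using trees treeD(1) by blast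
  have finSP: "finite (SP \<P>)" using finite_SP[OF fin lp] .
  have GSP: "G \<subseteq> Pow (SP \<P>)" using spD(1)[OF sp] .
  have finG: "finite G" using GSP finSP by (meson finite_Pow_iff finite_subset)
  have last: "\<forall>s \<in> SP \<P>. \<forall>g \<in> G. s \<in> g \<longleftrightarrow> (\<exists>g' \<in> G. pval part s g' g > 0)"
    using spD(6)[OF sp] .
  have PL: "is_lpts P" using lp P by blast
  have dmu: "is_dist (st P) \<mu>p" using lptsD(3)[OF PL tr] .
  have sst: "s \<in> st P" using lptsD(1)[OF PL tr] .
  have "(\<Sum>g'\<in>G. \<Sum>s'\<in>g'. f s' g') = (\<Sum>g'\<in>G. \<Sum>s'\<in>SP \<P>. f s' g')"
  proof (rule sum.cong[OF refl])
    fix g' assume g': "g' \<in> G"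
    have sub: "g' \<subseteq> SP \<P>" using g' GSP by blast
    show "(\<Sum>s'\<in>g'. f s' g') = (\<Sum>s'\<in>SP \<P>. f s' g')"
    proof (rule sum.mono_neutral_left[OF finSP sub])
      show "\<forall>i\<in>SP \<P> - g'. f i g' = 0"
      proof
        fix i assume i: "i \<in> SP \<P> - g'"
        then have "\<not> pval part i g g' > 0" using last g' gG by blast
        moreover have "pval part i g g' \<ge> 0" using pval_nonneg[OF sp] i by blast
        ultimately have "pval part i g g' = 0" by simp
        then show "f i g' = 0" unfolding f_def by simp
      qed
    qed
  qed
  also have "\<dots> = (\<Sum>s'\<in>SP \<P>. \<Sum>g'\<in>G. f s' g')" by (rule sum.swap)
  also have "\<dots> = (\<Sum>s'\<in>SP \<P>. (\<Sum>g'\<in>G. pval part s' g g') * (if fst s' = P then \<mu>p (snd s') else 0))"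
    unfolding f_def by (simp add: sum_distrib_right)
  also have "\<dots> = (\<Sum>s'\<in>Pair P ` st P. (\<Sum>g'\<in>G. pval part s' g g') * (if fst s' = P then \<mu>p (snd s') else 0))"
    by (rule sum.mono_neutral_right[OF finSP]) (auto simp: SP_def P)
  also have "\<dots> = (\<Sum>t\<in>st P. (\<Sum>g'\<in>G. pval part (P, t) g g') * \<mu>p t)"
    by (subst sum.reindex) (auto simp: inj_on_def)
  also have "\<dots> = (\<Sum>t\<in>st P. \<mu>p t)"
  proof (rule sum.cong[OF refl])
    fix t assume t: "t \<in> st P"
    show "(\<Sum>g'\<in>G. pval part (P, t) g g') * \<mu>p t = \<mu>p t"
    proof (cases "\<mu>p t = 0")
      case False
      then have pos: "\<mu>p t > 0" using dmu unfolding is_dist_def by (metis order_le_less)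
      have nt0: "t \<noteq> s0 P" using treeD(2)[of P s a \<mu>p] trees P tr pos by blast
      have ex1: "\<exists>!x. x \<in> tr P \<and> snd (snd x) t > 0"
        using treeD(3)[of P t] trees P t nt0 by blast
      have "(THE x. x \<in> tr P \<and> snd (snd x) t > 0) = (s, a, \<mu>p)"
        using ex1 tr pos by (metis (no_types, lifting) snd_conv the1_equality)
      then have par: "parent P t = s" unfolding parent_def by simp
      have sSP: "(P, s) \<in> SP \<P>" using P sst unfolding SP_def by blast
      have "\<exists>g'' \<in> G. pval part (P, parent P t) g'' g > 0" using last sSP gG sg par by blast
      then have "part (P, t) g \<noteq> None"
        using spD(5)[OF sp] P t nt0 gG by blast
      moreover have "(P, t) \<in> SP \<P>" using P t unfolding SP_def by blast
      ultimately have "(\<Sum>g'\<in>G. pval part (P, t) g g') = 1" using pval_sum[OF sp] by blast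
      then show ?thesis by simp
    qed simp
  qed
  also have "\<dots> = 1" using dmu unfolding is_dist_def by blast
  finally show ?thesis unfolding f_def .
qed

lemma quotient_simps:
  "st (quotient \<P> G part) = G" "act (quotient \<P> G part) = (\<Union>P \<in> \<P>. act P)"
  by (simp_all add: quotient_def)

lemma tr_quotientD:
  assumes "(g, a, \<mu>) \<in> tr (quotient \<P> G part)"
  shows "g \<in> G \<and>
               (\<exists>P \<in> \<P>. \<exists>s \<mu>p. (s, a, \<mu>p) \<in> tr P \<and> (P, s) \<in> g \<and>
                  (\<forall>g' \<in> G. \<mu> g' =
                     (\<Sum>s' \<in> g'. pval part s' g g' * (if fst s' = P then \<mu>p (snd s') else 0)))) \<and>
               (\<forall>g'. g' \<notin> G \<longrightarrow> \<mu> g' = 0)"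
  using assms unfolding quotient_def by simp

lemma tr_quotientE:
  assumes "(g, a, \<mu>) \<in> tr (quotient \<P> G part)"
  obtains P s \<mu>p where "g \<in> G" "P \<in> \<P>" "(s, a, \<mu>p) \<in> tr P" "(P, s) \<in> g"
    "\<forall>g' \<in> G. \<mu> g' = (\<Sum>s' \<in> g'. pval part s' g g' * (if fst s' = P then \<mu>p (snd s') else 0))"
    "\<forall>g'. g' \<notin> G \<longrightarrow> \<mu> g' = 0"
proof -
  note h = tr_quotientD[OF assms]
  have g: "g \<in> G" using h by (rule conjunct1)
  have o: "\<forall>g'. g' \<notin> G \<longrightarrow> \<mu> g' = 0" using h by (elim conjE)
  from conjunct1[OF conjunct2[OF h]] obtain P where P: "P \<in> \<P>" and
    ex: "\<exists>s \<mu>p. (s, a, \<mu>p) \<in> tr P \<and> (P, s) \<in> g \<and>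
                  (\<forall>g' \<in> G. \<mu> g' =
                     (\<Sum>s' \<in> g'. pval part s' g g' * (if fst s' = P then \<mu>p (snd s') else 0)))"
    by (rule bexE)
  from ex obtain s \<mu>p where h2: "(s, a, \<mu>p) \<in> tr P \<and> (P, s) \<in> g \<and>
                  (\<forall>g' \<in> G. \<mu> g' =
                     (\<Sum>s' \<in> g'. pval part s' g g' * (if fst s' = P then \<mu>p (snd s') else 0)))"
    by (elim exE)
  have t1: "(s, a, \<mu>p) \<in> tr P" using h2 by (rule conjunct1)
  have t2: "(P, s) \<in> g" using conjunct1[OF conjunct2[OF h2]] .
  have t3: "\<forall>g' \<in> G. \<mu> g' = (\<Sum>s' \<in> g'. pval part s' g g' * (if fst s' = P then \<mu>p (snd s') else 0))"
    using conjunct2[OF conjunct2[OF h2]] .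
  show ?thesis by (rule that[OF g P t1 t2 t3 o])
qed

theorem lemma8:
  fixes \<P> :: "('s, 'a) lpts set"
    and G :: "('s, 'a) pstate set set"
    and part :: "('s, 'a) pstate \<Rightarrow> ('s, 'a) pstate set \<Rightarrow> (('s, 'a) pstate set \<Rightarrow> rat) option"
  assumes "finite \<P>" and "\<P> \<noteq> {}"
    and "\<forall>P \<in> \<P>. stochastic_tree P"
    and "stochastic_partition \<P> G part"
  shows "is_lpts (quotient \<P> G part) \<and>
         (\<forall>(g, a, \<mu>) \<in> tr (quotient \<P> G part). is_dist G \<mu>)"
proof -
  note fin = assms(1) and trees = assms(3) and sp = assms(4)
  have lp: "\<forall>P\<in>\<P>. is_lpts P" using trees treeD(1) by blast
  have finSP: "finite (SP \<P>)" using finite_SP[OF fin lp] .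
  have GSP: "G \<subseteq> Pow (SP \<P>)" using spD(1)[OF sp] .
  have finG: "finite G" using GSP finSP by (meson finite_Pow_iff finite_subset)
  have dist: "is_dist G \<mu>" if "(g, a, \<mu>) \<in> tr (quotient \<P> G part)" for g a \<mu>
  proof -
    from that obtain P s \<mu>p where g: "g \<in> G" and P: "P \<in> \<P>" and tr: "(s, a, \<mu>p) \<in> tr P"
      and sg: "(P, s) \<in> g"
      and mu: "\<forall>g' \<in> G. \<mu> g' = (\<Sum>s' \<in> g'. pval part s' g g' * (if fst s' = P then \<mu>p (snd s') else 0))"
      and out: "\<forall>g'. g' \<notin> G \<longrightarrow> \<mu> g' = 0"
      by (rule tr_quotientE)
    have dmu: "is_dist (st P) \<mu>p" using lptsD(3)[OF bspec[OF lp P] tr] .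
    have nn: "0 \<le> \<mu> g'" for g'
    proof (cases "g' \<in> G")
      case True
      have "g' \<subseteq> SP \<P>" using True GSP by blast
      then have "\<forall>s'\<in>g'. 0 \<le> pval part s' g g' * (if fst s' = P then \<mu>p (snd s') else 0)"
        using pval_nonneg[OF sp] dmu unfolding is_dist_def by (auto intro: mult_nonneg_nonneg)
      then show ?thesis using mu True by (simp add: sum_nonneg)
    qed (use out in auto)
    have "sum \<mu> G = (\<Sum>g'\<in>G. \<Sum>s'\<in>g'. pval part s' g g' * (if fst s' = P then \<mu>p (snd s') else 0))"
      using mu by simp
    also have "\<dots> = 1" by (rule dist_part[OF fin trees sp P tr g sg])
    finally show ?thesis using nn out unfolding is_dist_def by blast
  qed
  have s0ex: "\<exists>g0. g0 \<in> G \<and> (\<forall>P \<in> \<P>. \<forall>g \<in> G. part (P, s0 P) g = Some (dirac g0))"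
    using spD(4)[OF sp] by blast
  have s0in: "s0 (quotient \<P> G part) \<in> G"
  proof -
    have "(SOME g0. g0 \<in> G \<and> (\<forall>P \<in> \<P>. \<forall>g \<in> G. part (P, s0 P) g = Some (dirac g0))) \<in> G"
      using someI_ex[OF s0ex] by blast
    then show ?thesis by (simp add: quotient_def)
  qed
  have finacts: "\<forall>P\<in>\<P>. finite (act P)" and fintrs: "\<forall>P\<in>\<P>. finite (tr P)"
    using lp by (simp_all add: is_lpts_def)
  have finact: "finite (act (quotient \<P> G part))"
    using fin finacts by (simp add: quotient_simps)
  define F where "F = (\<lambda>(g::('s, 'a) pstate set, P::('s, 'a) lpts, (s::'s, a::'a, \<mu>p::'s \<Rightarrow> rat)).
     (g, a, \<lambda>g'. if g' \<in> G then (\<Sum>s' \<in> g'. pval part s' g g' * (if fst s' = P then \<mu>p (snd s') else 0)) else 0))"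
  have sub: "tr (quotient \<P> G part) \<subseteq> F ` (G \<times> (SIGMA P:\<P>. tr P))"
  proof
    fix x assume x: "x \<in> tr (quotient \<P> G part)"
    obtain g a \<mu> where xe: "x = (g, a, \<mu>)" by (cases x) auto
    from x xe have x': "(g, a, \<mu>) \<in> tr (quotient \<P> G part)" by simp
    from x' obtain P s \<mu>p where g: "g \<in> G" and P: "P \<in> \<P>" and tr: "(s, a, \<mu>p) \<in> tr P"
      and mu: "\<forall>g' \<in> G. \<mu> g' = (\<Sum>s' \<in> g'. pval part s' g g' * (if fst s' = P then \<mu>p (snd s') else 0))"
      and out: "\<forall>g'. g' \<notin> G \<longrightarrow> \<mu> g' = 0"
      by (elim tr_quotientE) blast
    have "x = F (g, P, s, a, \<mu>p)" unfolding xe F_def using mu out by (auto intro!: ext)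
    then show "x \<in> F ` (G \<times> (SIGMA P:\<P>. tr P))" using g P tr by blast
  qed
  have fintr: "finite (tr (quotient \<P> G part))"
    apply (rule finite_subset[OF sub])
    apply (rule finite_imageI)
    apply (rule finite_cartesian_product[OF finG])
    apply (rule finite_SigmaI[OF fin])
    using fintrs by blast
  have trok: "\<forall>(g, a, \<mu>) \<in> tr (quotient \<P> G part). g \<in> st (quotient \<P> G part) \<and>
       a \<in> act (quotient \<P> G part) \<and> is_dist (st (quotient \<P> G part)) \<mu>"
  proof (clarify)
    fix g a \<mu> assume x: "(g, a, \<mu>) \<in> tr (quotient \<P> G part)"
    from x obtain P s \<mu>p where g: "g \<in> G" and P: "P \<in> \<P>" and tr: "(s, a, \<mu>p) \<in> tr P"
      by (elim tr_quotientE) blast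
    have "a \<in> act P" using lptsD(2)[OF bspec[OF lp P] tr] .
    then show "g \<in> st (quotient \<P> G part) \<and> a \<in> act (quotient \<P> G part) \<and>
       is_dist (st (quotient \<P> G part)) \<mu>"
      using g P dist[OF x] unfolding quotient_simps by blast
  qed
  have "is_lpts (quotient \<P> G part)"
    using finG s0in finact fintr trok unfolding is_lpts_def quotient_simps(1) by (intro conjI)
  then show ?thesis using dist by blast
qed

end
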